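(* Let $G$ be a finite vertex-transitive simple graph, let $v$ be any vertex of $G$, and let $P$ be a solvable pebble distribution on $G$. Then $$|P|\geq \frac{|V(G)|+\mathrm{TE}(P)}{\mathrm{ef}(v)}.$$
   Context: A pebble distribution on $G$ is a function $P:V(G)\to\mathbb{Z}_{\geq 0}$ with size $|P|=\sum_v P(v)$. A pebbling move from a vertex $u$ with at least two pebbles to an adjacent vertex removes two pebbles from $u$ and adds one to the neighbor. A vertex $w$ is $k$-reachable under $P$ if some executable sequence of pebbling moves yields at least $k$ pebbles on $w$; reachable means $1$-reachable; $P$ is solvable if all vertices are reachable. $\mathrm{reach}(P,w)$ is the largest such $k$. The excess $\mathrm{exc}(P,w)$ is $\mathrm{reach}(P,w)-1$ if $w$ is reachable and $0$ otherwise, and $\mathrm{TE}(P)=\sum_{w}\mathrm{exc}(P,w)$. With $N_i(v)$ the set of vertices at distance exactly $i$ from $v$, $\mathrm{ef}(v)=\sum_{i\geq 0}(1/2)^i|N_i(v)|$ (independent of $v$ for vertex-transitive $G$). *)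

theory Defs
  imports Complex_Main
begin

definition simple_graph :: "'a set \<Rightarrow> ('a \<Rightarrow> 'a \<Rightarrow> bool) \<Rightarrow> bool" where
  "simple_graph V E \<longleftrightarrow> finite V \<and> (\<forall>x y. E x y \<longrightarrow> x \<in> V \<and> y \<in> V)
     \<and> (\<forall>x y. E x y \<longrightarrow> E y x) \<and> (\<forall>x. \<not> E x x)"

definition vertex_transitive :: "'a set \<Rightarrow> ('a \<Rightarrow> 'a \<Rightarrow> bool) \<Rightarrow> bool" where
  "vertex_transitive V E \<longleftrightarrow> (\<forall>u\<in>V. \<forall>w\<in>V. \<exists>f. bij_betw f V V
     \<and> (\<forall>x\<in>V. \<forall>y\<in>V. E x y \<longleftrightarrow> E (f x) (f y)) \<and> f u = w)"

definition distribution :: "'a set \<Rightarrow> ('a \<Rightarrow> nat) \<Rightarrow> bool" where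
  "distribution V P \<longleftrightarrow> (\<forall>x. x \<notin> V \<longrightarrow> P x = 0)"

definition psize :: "'a set \<Rightarrow> ('a \<Rightarrow> nat) \<Rightarrow> nat" where
  "psize V P = (\<Sum>x\<in>V. P x)"

definition pebbling_move :: "('a \<Rightarrow> 'a \<Rightarrow> bool) \<Rightarrow> ('a \<Rightarrow> nat) \<Rightarrow> ('a \<Rightarrow> nat) \<Rightarrow> bool" where
  "pebbling_move E P Q \<longleftrightarrow> (\<exists>u w. E u w \<and> P u \<ge> 2 \<and> Q = (P(u := P u - 2))(w := P w + 1))"

definition k_reachable :: "('a \<Rightarrow> 'a \<Rightarrow> bool) \<Rightarrow> ('a \<Rightarrow> nat) \<Rightarrow> 'a \<Rightarrow> nat \<Rightarrow> bool" where
  "k_reachable E P w k \<longleftrightarrow> (\<exists>Q. (pebbling_move E)\<^sup>*\<^sup>* P Q \<and> Q w \<ge> k)"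

definition reachable_v :: "('a \<Rightarrow> 'a \<Rightarrow> bool) \<Rightarrow> ('a \<Rightarrow> nat) \<Rightarrow> 'a \<Rightarrow> bool" where
  "reachable_v E P w \<longleftrightarrow> k_reachable E P w 1"

definition solvable :: "'a set \<Rightarrow> ('a \<Rightarrow> 'a \<Rightarrow> bool) \<Rightarrow> ('a \<Rightarrow> nat) \<Rightarrow> bool" where
  "solvable V E P \<longleftrightarrow> (\<forall>w\<in>V. reachable_v E P w)"

definition reach :: "('a \<Rightarrow> 'a \<Rightarrow> bool) \<Rightarrow> ('a \<Rightarrow> nat) \<Rightarrow> 'a \<Rightarrow> nat" where
  "reach E P w = (GREATEST k. k_reachable E P w k)"

definition exc :: "('a \<Rightarrow> 'a \<Rightarrow> bool) \<Rightarrow> ('a \<Rightarrow> nat) \<Rightarrow> 'a \<Rightarrow> nat" where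
  "exc E P w = (if reachable_v E P w then reach E P w - 1 else 0)"

definition TE :: "'a set \<Rightarrow> ('a \<Rightarrow> 'a \<Rightarrow> bool) \<Rightarrow> ('a \<Rightarrow> nat) \<Rightarrow> nat" where
  "TE V E P = (\<Sum>w\<in>V. exc E P w)"

definition dist_is :: "('a \<Rightarrow> 'a \<Rightarrow> bool) \<Rightarrow> 'a \<Rightarrow> 'a \<Rightarrow> nat \<Rightarrow> bool" where
  "dist_is E v w i \<longleftrightarrow> (E ^^ i) v w \<and> (\<forall>j<i. \<not> (E ^^ j) v w)"

definition sphere :: "'a set \<Rightarrow> ('a \<Rightarrow> 'a \<Rightarrow> bool) \<Rightarrow> nat \<Rightarrow> 'a \<Rightarrow> 'a set" where
  "sphere V E i v = {w\<in>V. dist_is E v w i}"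

definition ef :: "'a set \<Rightarrow> ('a \<Rightarrow> 'a \<Rightarrow> bool) \<Rightarrow> 'a \<Rightarrow> real" where
  "ef V E v = (\<Sum>i. (1/2) ^ i * real (card (sphere V E i v)))"

end

theory Submission
  imports Defs
begin

definition wt :: "('a \<Rightarrow> 'a \<Rightarrow> bool) \<Rightarrow> 'a \<Rightarrow> 'a \<Rightarrow> real" where
  "wt E u w = (if \<exists>i. (E ^^ i) u w then (1/2) ^ (LEAST i. (E ^^ i) u w) else 0)"

definition pot :: "'a set \<Rightarrow> ('a \<Rightarrow> 'a \<Rightarrow> bool) \<Rightarrow> 'a \<Rightarrow> ('a \<Rightarrow> nat) \<Rightarrow> real" where
  "pot V E w Q = (\<Sum>u\<in>V. real (Q u) * wt E u w)"

lemma wt_nonneg: "0 \<le> wt E u w"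
  by (simp add: wt_def)

lemma wt_le1: "wt E u w \<le> 1"
  by (simp add: wt_def power_le_one)

lemma wt_self: "wt E w w = 1"
proof -
  have "(E ^^ 0) w w" by simp
  hence "(LEAST i. (E ^^ i) w w) = 0" by (intro Least_equality) auto
  moreover have "\<exists>i. (E ^^ i) w w" using \<open>(E ^^ 0) w w\<close> by blast
  ultimately show ?thesis unfolding wt_def by simp
qed

lemma wt_step:
  assumes "E u x" shows "wt E x w \<le> 2 * wt E u w"
proof (cases "\<exists>i. (E ^^ i) x w")
  case True
  define L where "L = (LEAST i. (E ^^ i) x w)"
  have "(E ^^ L) x w" unfolding L_def using True by (rule LeastI_ex)
  hence h: "(E ^^ Suc L) u w" using assms by (rule relpowp_Suc_I2[rotated])
  hence ex: "\<exists>i. (E ^^ i) u w" by blast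
  have le: "(LEAST i. (E ^^ i) u w) \<le> Suc L" using h by (rule Least_le)
  have "(1/2::real) ^ Suc L \<le> (1/2) ^ (LEAST i. (E ^^ i) u w)"
    using le by (intro power_decreasing) auto
  thus ?thesis unfolding wt_def using True ex L_def by simp
next
  case False
  thus ?thesis unfolding wt_def by simp
qed

lemma dist_is_iff:
  "dist_is E v w i \<longleftrightarrow> (\<exists>j. (E ^^ j) v w) \<and> i = (LEAST j. (E ^^ j) v w)"
proof
  assume a: "dist_is E v w i"
  hence "(E ^^ i) v w" "\<forall>j<i. \<not> (E ^^ j) v w" by (auto simp: dist_is_def)
  moreover have "(LEAST j. (E ^^ j) v w) \<le> i" using calculation(1) by (rule Least_le)
  moreover have "(E ^^ (LEAST j. (E ^^ j) v w)) v w" using calculation(1) by (rule LeastI)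
  ultimately show "(\<exists>j. (E ^^ j) v w) \<and> i = (LEAST j. (E ^^ j) v w)"
    by (metis le_neq_implies_less)
next
  assume "(\<exists>j. (E ^^ j) v w) \<and> i = (LEAST j. (E ^^ j) v w)"
  thus "dist_is E v w i" unfolding dist_is_def
    by (metis LeastI_ex not_less_Least)
qed

lemma ef_eq:
  assumes "finite V"
  shows "ef V E v = (\<Sum>w\<in>V. wt E v w)"
proof -
  have card_eq: "real (card (sphere V E i v)) = (\<Sum>w\<in>V. if dist_is E v w i then 1 else 0)" for i
  proof -
    have "card (sphere V E i v) = card {w\<in>V. dist_is E v w i}" by (simp add: sphere_def)
    also have "\<dots> = (\<Sum>w\<in>V. if dist_is E v w i then 1 else (0::nat))"
    proof -
      have "{w\<in>V. dist_is E v w i} = V \<inter> {w. dist_is E v w i}" by blast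
      thus ?thesis using assms by (simp add: sum.If_cases)
    qed
    finally have "real (card (sphere V E i v)) = real (\<Sum>w\<in>V. if dist_is E v w i then 1 else (0::nat))" by simp
    also have "\<dots> = (\<Sum>w\<in>V. if dist_is E v w i then 1 else 0)" unfolding of_nat_sum
      by (intro sum.cong) auto
    finally show ?thesis .
  qed
  have term_eq: "(1/2) ^ i * real (card (sphere V E i v))
      = (\<Sum>w\<in>V. (1/2::real) ^ i * (if dist_is E v w i then 1 else 0))" for i
    by (simp add: card_eq sum_distrib_left)
  have s: "(\<lambda>i. (1/2::real) ^ i * (if dist_is E v w i then 1 else 0)) sums wt E v w" for w
  proof (cases "\<exists>j. (E ^^ j) v w")
    case True
    define L where "L = (LEAST j. (E ^^ j) v w)"
    have "(\<lambda>i. (1/2::real) ^ i * (if dist_is E v w i then 1 else 0))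
        = (\<lambda>i. if i = L then (1/2) ^ i else 0)"
      using True by (auto simp: dist_is_iff L_def)
    moreover have "wt E v w = (1/2) ^ L" using True by (simp add: wt_def L_def)
    ultimately show ?thesis using sums_single[of L "\<lambda>i. (1/2::real) ^ i"] by simp
  next
    case False
    hence "(\<lambda>i. (1/2::real) ^ i * (if dist_is E v w i then 1 else 0)) = (\<lambda>i. 0)"
      by (auto simp: dist_is_iff)
    moreover have "wt E v w = 0" using False by (simp add: wt_def)
    ultimately show ?thesis by simp
  qed
  have "(\<lambda>i. (1/2) ^ i * real (card (sphere V E i v))) sums (\<Sum>w\<in>V. wt E v w)"
    unfolding term_eq by (rule sums_sum) (rule s)
  thus ?thesis unfolding ef_def by (rule sums_unique[symmetric])
qed

lemma pot_move:
  assumes g: "simple_graph V E" and m: "pebbling_move E Q Q'"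
  shows "pot V E w Q' \<le> pot V E w Q"
proof -
  obtain u x where ux: "E u x" "Q u \<ge> 2" "Q' = (Q(u := Q u - 2))(x := Q x + 1)"
    using m unfolding pebbling_move_def by blast
  have inV: "u \<in> V" "x \<in> V" and ne: "u \<noteq> x" and fin: "finite V"
    using g ux(1) unfolding simple_graph_def by metis+
  have q: "real (Q' y) = real (Q y) - 2 * (if y = u then 1 else 0) + (if y = x then 1 else 0)" for y
    using ux ne by (auto simp: of_nat_diff)
  have "pot V E w Q' = (\<Sum>y\<in>V. real (Q y) * wt E y w
      - 2 * (if y = u then wt E y w else 0) + (if y = x then wt E y w else 0))"
    unfolding pot_def q by (intro sum.cong) (auto simp: algebra_simps)
  also have "\<dots> = pot V E w Q - 2 * wt E u w + wt E x w"
    using fin inV by (simp add: sum.distrib sum_subtractf sum_distrib_left[symmetric] pot_def)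
  also have "\<dots> \<le> pot V E w Q" using wt_step[of E u x w, OF ux(1)] by linarith
  finally show ?thesis .
qed

lemma pot_rtrancl:
  assumes g: "simple_graph V E" and r: "(pebbling_move E)\<^sup>*\<^sup>* P Q"
  shows "pot V E w Q \<le> pot V E w P"
  using r
proof (induction rule: rtranclp_induct)
  case base thus ?case by simp
next
  case (step y z) thus ?case using pot_move[OF g step(2), of w] by linarith
qed

lemma val_le_pot:
  assumes "finite V" "w \<in> V"
  shows "real (Q w) \<le> pot V E w Q"
proof -
  have "real (Q w) * wt E w w \<le> (\<Sum>u\<in>V. real (Q u) * wt E u w)"
    using assms by (intro member_le_sum) (auto intro: mult_nonneg_nonneg wt_nonneg)
  thus ?thesis by (simp add: wt_self pot_def)
qed

lemma pot_le_size:
  "pot V E w P \<le> real (psize V P)"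
  unfolding pot_def psize_def of_nat_sum
  by (intro sum_mono) (simp add: mult_left_le wt_le1 wt_nonneg)

lemma reach_le:
  assumes g: "simple_graph V E" and w: "w \<in> V"
  shows "k_reachable E P w (reach E P w)" "real (reach E P w) \<le> pot V E w P"
proof -
  have fin: "finite V" using g by (simp add: simple_graph_def)
  have bnd: "real k \<le> pot V E w P" if hk: "k_reachable E P w k" for k
  proof -
    obtain Q where Q: "(pebbling_move E)\<^sup>*\<^sup>* P Q" "Q w \<ge> k" using hk unfolding k_reachable_def by blast
    thus ?thesis using pot_rtrancl[OF g Q(1), of w] Q(2) val_le_pot[OF fin w, of Q E] by (smt (verit) of_nat_mono)
  qed
  have bnd2: "k \<le> psize V P" if "k_reachable E P w k" for k
    using bnd[OF that] pot_le_size[of V E w P] by linarith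
  have k0: "k_reachable E P w 0" unfolding k_reachable_def by (intro exI[of _ P]) simp
  show kr: "k_reachable E P w (reach E P w)" unfolding reach_def
    by (rule GreatestI_nat[of "k_reachable E P w" 0 "psize V P", OF k0 bnd2])
  show "real (reach E P w) \<le> pot V E w P" by (rule bnd[OF kr])
qed

lemma reach_ge1:
  assumes g: "simple_graph V E" and w: "w \<in> V" and r: "reachable_v E P w"
  shows "1 \<le> reach E P w"
proof -
  have fin: "finite V" using g by (simp add: simple_graph_def)
  have bnd2: "k \<le> psize V P" if hk: "k_reachable E P w k" for k
  proof -
    obtain Q where Q: "(pebbling_move E)\<^sup>*\<^sup>* P Q" "Q w \<ge> k" using hk unfolding k_reachable_def by blast
    thus ?thesis using pot_rtrancl[OF g Q(1), of w] Q(2) val_le_pot[OF fin w, of Q E]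
        pot_le_size[of V E w P] by (smt (verit) of_nat_mono of_nat_le_iff)
  qed
  show ?thesis unfolding reach_def
    by (rule Greatest_le_nat[of "k_reachable E P w" 1 "psize V P", OF r[unfolded reachable_v_def] bnd2])
qed

lemma relpow_auto:
  assumes g: "simple_graph V E" and f: "bij_betw f V V"
    and pres: "\<forall>x\<in>V. \<forall>y\<in>V. E x y \<longleftrightarrow> E (f x) (f y)"
  shows "a \<in> V \<Longrightarrow> b \<in> V \<Longrightarrow> (E ^^ i) (f a) (f b) \<longleftrightarrow> (E ^^ i) a b"
proof (induction i arbitrary: b)
  case 0
  then show ?case using f by (auto simp: bij_betw_def inj_on_def)
next
  case (Suc i)
  have inV: "\<And>x y. E x y \<Longrightarrow> x \<in> V \<and> y \<in> V" using g by (simp add: simple_graph_def)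
  show ?case
  proof
    assume "(E ^^ Suc i) (f a) (f b)"
    then obtain c' where c': "(E ^^ i) (f a) c'" "E c' (f b)" by (auto elim: relpowp_Suc_E)
    have "c' \<in> V" using inV c'(2) by blast
    then obtain c where c: "c \<in> V" "c' = f c" using f by (metis bij_betw_imp_surj_on imageE)
    have "(E ^^ i) a c" using Suc.IH[OF Suc.prems(1) c(1)] c' c by simp
    moreover have "E c b" using pres c Suc.prems c' by blast
    ultimately show "(E ^^ Suc i) a b" by (rule relpowp_Suc_I)
  next
    assume "(E ^^ Suc i) a b"
    then obtain c where c: "(E ^^ i) a c" "E c b" by (auto elim: relpowp_Suc_E)
    have "c \<in> V" using inV c(2) by blast
    hence "(E ^^ i) (f a) (f c)" using Suc.IH[OF Suc.prems(1)] c by simp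
    moreover have "E (f c) (f b)" using pres c \<open>c \<in> V\<close> Suc.prems by blast
    ultimately show "(E ^^ Suc i) (f a) (f b)" by (rule relpowp_Suc_I)
  qed
qed

lemma wtsum_const:
  assumes g: "simple_graph V E" and vt: "vertex_transitive V E" and v: "v \<in> V" and u: "u \<in> V"
  shows "(\<Sum>w\<in>V. wt E u w) = (\<Sum>w\<in>V. wt E v w)"
proof -
  obtain f where f: "bij_betw f V V" "\<forall>x\<in>V. \<forall>y\<in>V. E x y \<longleftrightarrow> E (f x) (f y)" "f v = u"
    using vt v u unfolding vertex_transitive_def by blast
  have eq: "wt E (f v) (f w) = wt E v w" if "w \<in> V" for w
  proof -
    have "\<And>i. (E ^^ i) (f v) (f w) \<longleftrightarrow> (E ^^ i) v w"
      using relpow_auto[OF g f(1) f(2) v that] .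
    thus ?thesis unfolding wt_def by simp
  qed
  have "(\<Sum>w\<in>V. wt E u w) = (\<Sum>w\<in>V. wt E u (f w))"
    using sum.reindex_bij_betw[OF f(1), of "\<lambda>w. wt E u w"] by simp
  also have "\<dots> = (\<Sum>w\<in>V. wt E v w)" using eq f(3) by (intro sum.cong) auto
  finally show ?thesis .
qed

theorem corollary2p2:
  fixes V :: "'a set" and E :: "'a \<Rightarrow> 'a \<Rightarrow> bool" and P :: "'a \<Rightarrow> nat" and v :: 'a
  assumes "simple_graph V E" and "vertex_transitive V E" and "v \<in> V"
    and "distribution V P" and "solvable V E P"
  shows "real (psize V P) \<ge> (real (card V) + real (TE V E P)) / ef V E v"
proof -
  note g = assms(1)
  have fin: "finite V" using g by (simp add: simple_graph_def)
  have efv: "ef V E v = (\<Sum>w\<in>V. wt E v w)" by (rule ef_eq[OF fin])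
  have efpos: "1 \<le> ef V E v"
  proof -
    have "wt E v v \<le> (\<Sum>w\<in>V. wt E v w)"
      using fin assms(3) by (intro member_le_sum) (auto intro: wt_nonneg)
    thus ?thesis using efv wt_self[of E v] by simp
  qed
  have each: "1 + real (exc E P w) \<le> pot V E w P" if w: "w \<in> V" for w
  proof -
    have r: "reachable_v E P w" using assms(5) w by (simp add: solvable_def)
    have "1 \<le> reach E P w" by (rule reach_ge1[OF g w r])
    hence "1 + real (exc E P w) = real (reach E P w)" using r by (simp add: exc_def of_nat_diff)
    thus ?thesis using reach_le(2)[OF g w, of P] by simp
  qed
  have "real (card V) + real (TE V E P) = (\<Sum>w\<in>V. 1 + real (exc E P w))"
    by (simp add: TE_def sum.distrib)
  also have "\<dots> \<le> (\<Sum>w\<in>V. pot V E w P)" using each by (rule sum_mono)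
  also have "\<dots> = (\<Sum>u\<in>V. real (P u) * (\<Sum>w\<in>V. wt E u w))"
    unfolding pot_def sum_distrib_left by (rule sum.swap)
  also have "\<dots> = (\<Sum>u\<in>V. real (P u) * ef V E v)"
    using wtsum_const[OF g assms(2) assms(3)] efv by (intro sum.cong) auto
  also have "\<dots> = real (psize V P) * ef V E v"
    by (simp add: psize_def sum_distrib_right)
  finally show ?thesis using efpos by (simp add: divide_le_eq)
qed

end
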